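(* Let $S\subseteq[r]$. For $i\in\{1,\dots,r\}$, let $N(i)$ be the number of permutations $a_1a_2\cdots a_{r+1}$ of $1,\dots,r+1$ with descent set $S$ in which $r+1$ appears before $i$. Then $N(i)$ does not depend on $i$.
   Context: The descent set of a permutation $a_1a_2\cdots a_{r+1}$ is $\{j\in[r]: a_j>a_{j+1}\}$. *)

theory Defs
  imports "HOL-Combinatorics.Multiset_Permutations"
begin

text \<open>Descent set of a permutation a_1 ... a_(r+1), given as a list xs (xs ! k = a_(k+1)):
  the set of j in {1..r} (r+1 = length xs) with a_j > a_(j+1).\<close>
definition descent_set :: "nat list \<Rightarrow> nat set" where
  "descent_set xs = {j \<in> {1..length xs - 1}. xs ! (j - 1) > xs ! j}"

definition N_count :: "nat \<Rightarrow> nat set \<Rightarrow> nat \<Rightarrow> nat" where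
  "N_count r S i = card {xs \<in> permutations_of_set {1..r+1}.
      descent_set xs = S \<and> (\<exists>p q. p < q \<and> q < length xs \<and> xs ! p = r + 1 \<and> xs ! q = i)}"

end

theory Submission
  imports Defs
begin

definition tr :: "nat \<Rightarrow> nat \<Rightarrow> nat" where
  "tr i a = (if a = i then Suc i else if a = Suc i then i else a)"

definition adj :: "nat \<Rightarrow> nat list \<Rightarrow> bool" where
  "adj i xs = (\<exists>k. Suc k < length xs \<and> ((xs!k = i \<and> xs!Suc k = Suc i) \<or> (xs!k = Suc i \<and> xs!Suc k = i)))"

definition ff :: "nat \<Rightarrow> nat list \<Rightarrow> nat list" where
  "ff i xs = (if adj i xs then xs else map (tr i) xs)"

lemma tr_tr[simp]: "tr i (tr i a) = a" by (simp add: tr_def)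

lemma tr_inj: "inj (tr i)" by (metis injI tr_tr)

lemma tr_image: "i \<in> A \<Longrightarrow> Suc i \<in> A \<Longrightarrow> tr i ` A = A"
  unfolding tr_def by (auto simp: image_iff)

lemma perm_map:
  assumes "xs \<in> permutations_of_set A" "i \<in> A" "Suc i \<in> A"
  shows "map (tr i) xs \<in> permutations_of_set A"
  using assms tr_image[OF assms(2,3)] inj_on_subset[OF tr_inj]
  by (auto simp: permutations_of_set_def distinct_map)

lemma adj_map: "adj i (map (tr i) xs) = adj i xs"
  unfolding adj_def by (auto simp: tr_def split: if_splits)

lemma map_map_tr: "map (tr i) (map (tr i) xs) = xs"
  by (induct xs) auto

lemma ff_ff: "ff i (ff i xs) = xs"
  by (simp add: ff_def adj_map map_map_tr del: map_map)

lemma tr_less: "a \<noteq> b \<Longrightarrow> \<not>(a = i \<and> b = Suc i) \<Longrightarrow> \<not>(a = Suc i \<and> b = i) \<Longrightarrow>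
   (tr i b < tr i a \<longleftrightarrow> b < a)"
  by (auto simp: tr_def)

lemma desc_map:
  assumes "\<not> adj i xs" "distinct xs"
  shows "descent_set (map (tr i) xs) = descent_set xs"
proof -
  have "tr i (xs!j) < tr i (xs!(j-1)) \<longleftrightarrow> xs!j < xs!(j-1)" if "j \<in> {1..length xs - 1}" for j
  proof -
    from that have j: "j - 1 < length xs" "j < length xs" "j - 1 \<noteq> j" "Suc (j-1) = j" by auto
    then have ne: "xs!(j-1) \<noteq> xs!j" using assms(2) nth_eq_iff_index_eq by blast
    have "\<not>((xs!(j-1) = i \<and> xs!j = Suc i) \<or> (xs!(j-1) = Suc i \<and> xs!j = i))"
      using assms(1) j unfolding adj_def by (metis)
    then show ?thesis using tr_less[OF ne] by blast
  qed
  then show ?thesis unfolding descent_set_def by auto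
qed

lemma pos_adj1:
  assumes "distinct xs" "Suc k < length xs" "xs!k = a" "xs!Suc k = b" "c \<noteq> a" "c \<noteq> b"
  shows "(\<exists>p q. p < q \<and> q < length xs \<and> xs ! p = c \<and> xs ! q = a) \<longleftrightarrow>
         (\<exists>p q. p < q \<and> q < length xs \<and> xs ! p = c \<and> xs ! q = b)"
proof
  assume "\<exists>p q. p < q \<and> q < length xs \<and> xs ! p = c \<and> xs ! q = a"
  then obtain p q where h: "p < q" "q < length xs" "xs ! p = c" "xs ! q = a" by blast
  then have "q = k" using assms nth_eq_iff_index_eq by (metis Suc_lessD)
  then show "\<exists>p q. p < q \<and> q < length xs \<and> xs ! p = c \<and> xs ! q = b"
    using h assms by (intro exI[of _ p] exI[of _ "Suc k"]) auto
next
  assume "\<exists>p q. p < q \<and> q < length xs \<and> xs ! p = c \<and> xs ! q = b"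
  then obtain p q where h: "p < q" "q < length xs" "xs ! p = c" "xs ! q = b" by blast
  then have "q = Suc k" using assms nth_eq_iff_index_eq by metis
  moreover have "p \<noteq> k" using h assms by auto
  ultimately show "\<exists>p q. p < q \<and> q < length xs \<and> xs ! p = c \<and> xs ! q = a"
    using h assms by (intro exI[of _ p] exI[of _ k]) auto
qed

abbreviation Pb :: "nat list \<Rightarrow> nat \<Rightarrow> nat \<Rightarrow> bool" where
  "Pb xs c a \<equiv> (\<exists>p q. p < q \<and> q < length xs \<and> xs ! p = c \<and> xs ! q = a)"

lemma ff_props:
  assumes xs: "xs \<in> permutations_of_set {1..r+1}" and i: "1 \<le> i" "Suc i \<le> r"
  shows "ff i xs \<in> permutations_of_set {1..r+1}"
    "descent_set (ff i xs) = descent_set xs"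
    "Pb (ff i xs) (r+1) (Suc i) \<longleftrightarrow> Pb xs (r+1) i"
proof -
  have d: "distinct xs" using xs by (simp add: permutations_of_set_def)
  show "ff i xs \<in> permutations_of_set {1..r+1}"
    using perm_map[OF xs] i xs by (simp add: ff_def)
  show "descent_set (ff i xs) = descent_set xs"
    using desc_map[OF _ d] by (simp add: ff_def)
  show "Pb (ff i xs) (r+1) (Suc i) \<longleftrightarrow> Pb xs (r+1) i"
  proof (cases "adj i xs")
    case True
    then obtain k where k: "Suc k < length xs"
      "(xs!k = i \<and> xs!Suc k = Suc i) \<or> (xs!k = Suc i \<and> xs!Suc k = i)"
      unfolding adj_def by blast
    have "Pb xs (r+1) i \<longleftrightarrow> Pb xs (r+1) (Suc i)"
      using k pos_adj1[OF d k(1), of i "Suc i" "r+1"] pos_adj1[OF d k(1), of "Suc i" i "r+1"] i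
      by auto
    then show ?thesis using True by (simp add: ff_def)
  next
    case False
    have e1: "tr i a = Suc r \<longleftrightarrow> a = Suc r" for a using i by (auto simp: tr_def)
    have e2: "tr i a = Suc i \<longleftrightarrow> a = i" for a using i by (auto simp: tr_def)
    have "Pb (map (tr i) xs) (Suc r) (Suc i) \<longleftrightarrow> Pb xs (Suc r) i"
    proof
      assume "Pb (map (tr i) xs) (Suc r) (Suc i)"
      then obtain p q where "p < q" "q < length xs" "map (tr i) xs ! p = Suc r" "map (tr i) xs ! q = Suc i" by auto
      then show "Pb xs (Suc r) i" by (auto simp: e1 e2)
    next
      assume "Pb xs (Suc r) i"
      then obtain p q where "p < q" "q < length xs" "xs ! p = Suc r" "xs ! q = i" by auto
      then show "Pb (map (tr i) xs) (Suc r) (Suc i)" 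
        by (intro exI[of _ p] exI[of _ q]) (auto simp: e1 e2)
    qed
    then show ?thesis using False by (simp add: ff_def)
  qed
qed

lemma step:
  assumes i: "1 \<le> i" "Suc i \<le> r"
  shows "N_count r S i = N_count r S (Suc i)"
proof -
  let ?A = "\<lambda>a. {xs \<in> permutations_of_set {1..r+1}. descent_set xs = S \<and> Pb xs (r+1) a}"
  have "bij_betw (ff i) (?A i) (?A (Suc i))"
  proof (rule bij_betw_byWitness[where f' = "ff i"])
    show "\<forall>a\<in>?A i. ff i (ff i a) = a" by (simp add: ff_ff)
    show "\<forall>a\<in>?A (Suc i). ff i (ff i a) = a" by (simp add: ff_ff)
    show "ff i ` ?A i \<subseteq> ?A (Suc i)"
    proof
      fix y assume "y \<in> ff i ` ?A i"
      then obtain x where x: "x \<in> ?A i" "y = ff i x" by blast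
      have xp: "x \<in> permutations_of_set {1..r+1}" using x by blast
      have yp: "y \<in> permutations_of_set {1..r+1}" using x ff_props(1)[OF xp i] by simp
      have yd: "descent_set y = S" using x ff_props(2)[OF xp i] by simp
      have "Pb y (r+1) (Suc i)" using x ff_props(3)[OF xp i] by blast
      then show "y \<in> ?A (Suc i)" using yp yd by blast
    qed
    show "ff i ` ?A (Suc i) \<subseteq> ?A i"
    proof
      fix y assume "y \<in> ff i ` ?A (Suc i)"
      then obtain x where x: "x \<in> ?A (Suc i)" "y = ff i x" by blast
      have yp: "y \<in> permutations_of_set {1..r+1}" using x ff_props(1)[OF _ i, of x] by simp
      have yd: "descent_set y = S" using x ff_props(2)[OF _ i, of x] by simp
      have "Pb (ff i y) (r+1) (Suc i)" using x by (simp add: ff_ff)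
      then have "Pb y (r+1) i" using ff_props(3)[OF yp i] by blast
      then show "y \<in> ?A i" using yp yd by blast
    qed
  qed
  then show ?thesis unfolding N_count_def by (rule bij_betw_same_card)
qed

lemma chain: "1 \<le> i \<Longrightarrow> i + d \<le> r \<Longrightarrow> N_count r S i = N_count r S (i + d)"
proof (induct d)
  case (Suc d)
  then show ?case using step[of "i+d" r S] by simp
qed simp

theorem lemma3p4:
  fixes r :: nat and S :: "nat set"
  assumes "S \<subseteq> {1..r}"
    and "i \<in> {1..r}" and "j \<in> {1..r}"
  shows "N_count r S i = N_count r S j"
proof (cases "i \<le> j")
  case True
  then show ?thesis using chain[of i "j - i" r S] assms by simp
next
  case False
  then show ?thesis using chain[of j "i - j" r S] assms by simp
qed

end
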